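(* Let $E$ be an equation in the unknowns $x_1,\dots,x_n$ and let $h$ be an erasing solution of $E$ of rank $n-1$. Then $h(x_k)$ is the empty word for exactly one index $k$, the equation $\delta_k(E)$ is trivial, and $\Gamma_h=\{\mathbf u\in\mathbb Q^n:(\mathbf u)_k=0\}$.
   Context: An equation is a pair $(u,v)$ of words over $\{x_1,\dots,x_n\}$, trivial if $u=v$; a solution is a morphism $h$ into a free monoid $\{a_1,\dots,a_r\}^*$ with $h(u)=h(v)$; $h$ is erasing if some $h(x_i)$ is empty. $\gamma(h)_i=(|h(x_1)|_{a_i},\dots,|h(x_n)|_{a_i})$, $\Gamma_h$ is the $\mathbb Q$-span of the $\gamma(h)_i$ and the rank of $h$ is $\dim\Gamma_h$. $\delta_k(E)$ denotes the equation in $n-1$ unknowns obtained from $E$ by deleting all occurrences of $x_k$ on both sides. *)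

theory Defs
  imports "HOL-Analysis.Analysis"
begin

text \<open>Unknowns are the elements of a finite type 'x (so n = CARD('x)); letters of the
alphabet are elements of a finite type 'a. Words are lists. An equation is a pair of words.\<close>

type_synonym 'x equation = "'x list \<times> 'x list"

definition trivial_eq :: "'x equation \<Rightarrow> bool" where
  "trivial_eq E \<longleftrightarrow> fst E = snd E"

definition morph :: "('x \<Rightarrow> 'a list) \<Rightarrow> 'x list \<Rightarrow> 'a list" where
  "morph h w = concat (map h w)"

definition is_solution :: "('x \<Rightarrow> 'a list) \<Rightarrow> 'x equation \<Rightarrow> bool" where
  "is_solution h E \<longleftrightarrow> morph h (fst E) = morph h (snd E)"

definition erasing :: "('x \<Rightarrow> 'a list) \<Rightarrow> bool" where
  "erasing h \<longleftrightarrow> (\<exists>x. h x = [])"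

definition gamma :: "('x::finite \<Rightarrow> 'a list) \<Rightarrow> 'a \<Rightarrow> rat ^ 'x" where
  "gamma h a = (\<chi> x. of_nat (count_list (h x) a))"

definition Gamma :: "('x::finite \<Rightarrow> 'a::finite list) \<Rightarrow> (rat ^ 'x) set" where
  "Gamma h = vec.span (range (gamma h))"

definition rank :: "('x::finite \<Rightarrow> 'a::finite list) \<Rightarrow> nat" where
  "rank h = vec.dim (Gamma h)"

definition delta :: "'x \<Rightarrow> 'x equation \<Rightarrow> 'x equation" where
  "delta k E = (filter (\<lambda>y. y \<noteq> k) (fst E), filter (\<lambda>y. y \<noteq> k) (snd E))"

end

theory Submission imports Defs begin

definition good :: "('x::finite \<Rightarrow> 'a list) \<Rightarrow> 'x set \<Rightarrow> bool" where
 "good g V \<longleftrightarrow> (\<exists>c::'x\<Rightarrow>rat. (\<exists>w. c w \<noteq> 0) \<and> (\<forall>w. c w \<noteq> 0 \<longrightarrow> w \<in> V) \<and>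
     (\<forall>a. (\<Sum>w\<in>UNIV. c w * of_nat (count_list (g w) a)) = 0))"

lemma good_mono: "good g V \<Longrightarrow> V \<subseteq> W \<Longrightarrow> good g W"
  unfolding good_def by blast

lemma morph_simps[simp]: "morph g [] = []" "morph g (x#w) = g x @ morph g w"
  "morph g (u @ w) = morph g u @ morph g w"
  by (auto simp: morph_def)

lemma sum_two:
  fixes F :: "'x::finite \<Rightarrow> rat"
  assumes "x \<noteq> y"
  shows "(\<Sum>w\<in>UNIV. (if w = x then p else if w = y then q else 0) * F w) = p * F x + q * F y"
proof -
  have "(\<Sum>w\<in>UNIV. (if w = x then p else if w = y then q else 0) * F w)
     = (\<Sum>w\<in>UNIV. (if w = x then p * F x else 0) + (if w = y then q * F y else 0))"
    by (rule sum.cong) (use assms in auto)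
  also have "\<dots> = p * F x + q * F y" by (simp add: sum.distrib)
  finally show ?thesis .
qed

lemma sum_split_at:
  fixes f :: "'x::finite \<Rightarrow> nat"
  shows "(\<Sum>w\<in>UNIV. f w) = f x + (\<Sum>w\<in>UNIV-{x}. f w)"
  by (simp add: sum.remove)

lemma core_step:
  fixes g :: "'x::finite \<Rightarrow> 'a list"
  assumes IH: "\<And>(g'::'x \<Rightarrow> 'a list) x y u v. (\<Sum>z\<in>UNIV. length (g' z)) < (\<Sum>z\<in>UNIV. length (g z)) \<Longrightarrow> x \<noteq> y \<Longrightarrow>
      morph g' (x#u) = morph g' (y#v) \<Longrightarrow> (\<forall>z\<in>set (x#u) \<union> set (y#v). g' z \<noteq> []) \<Longrightarrow>
      good g' (set (x#u) \<union> set (y#v))"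
  and xy: "x \<noteq> y" and eq: "morph g (x#u) = morph g (y#v)"
  and ne: "\<forall>z\<in>set (x#u) \<union> set (y#v). g z \<noteq> []"
  and gx: "g x = g y @ t"
  shows "good g (set (x#u) \<union> set (y#v))"
proof (cases "t = []")
  case True
  let ?c = "\<lambda>w. if w = x then 1 else if w = y then -1 else (0::rat)"
  show ?thesis unfolding good_def
  proof (intro exI[of _ ?c] conjI allI impI)
    show "\<exists>w. ?c w \<noteq> 0" by (intro exI[of _ x]) simp
  next
    fix w assume "?c w \<noteq> 0" thus "w \<in> set (x#u) \<union> set (y#v)" by (auto split: if_splits)
  next
    fix a show "(\<Sum>w\<in>UNIV. ?c w * of_nat (count_list (g w) a)) = 0"
      using sum_two[OF xy, of 1 "-1" "\<lambda>w. of_nat (count_list (g w) a)"] gx True by simp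
  qed
next
  case False
  define g' where "g' = g(x := t)"
  define \<sigma> where "\<sigma> = (\<lambda>w. if w = x then [y,x] else [w])"
  have g'y: "g' y = g y" using xy by (simp add: g'_def)
  have g'x: "g' x = t" by (simp add: g'_def)
  have g'o: "w \<noteq> x \<Longrightarrow> g' w = g w" for w by (simp add: g'_def)
  have hw: "morph g' (\<sigma> w) = g w" for w
  proof (cases "w = x")
    case True then show ?thesis using g'x g'y gx by (simp add: \<sigma>_def)
  next
    case False then show ?thesis using g'o by (simp add: \<sigma>_def)
  qed
  have hom: "morph g' (morph \<sigma> w) = morph g w" for w
    by (induction w) (simp_all add: hw[symmetric] morph_def)
  have setsig: "set (morph \<sigma> w) \<subseteq> set w \<union> {y}" for w
    by (induction w) (auto simp: \<sigma>_def)
  have tv: "t @ morph g u = morph g v" using eq gx by simp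
  then have eq2: "morph g' (x # morph \<sigma> u) = morph g' (morph \<sigma> v)"
    by (simp add: hom g'x)
  have "v \<noteq> []" using tv False by auto
  then obtain z v' where v: "v = z # v'" by (cases v) auto
  have ny: "g y \<noteq> []" using ne by simp
  have meas: "(\<Sum>w\<in>UNIV. length (g' w)) < (\<Sum>w\<in>UNIV. length (g w))"
  proof -
    have "(\<Sum>w\<in>UNIV-{x}. length (g' w)) = (\<Sum>w\<in>UNIV-{x}. length (g w))"
      by (rule sum.cong) (auto simp: g'_def)
    moreover have "length (g' x) < length (g x)" using ny gx by (simp add: g'_def)
    ultimately show ?thesis using sum_split_at[of "\<lambda>w. length (g' w)" x] sum_split_at[of "\<lambda>w. length (g w)" x]
      by simp
  qed
  define V where "V = set (x#u) \<union> set (y#v)"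
  have ne': "\<forall>z\<in>V. g' z \<noteq> []" using ne False by (auto simp: g'_def V_def)
  have sub1: "set (x # morph \<sigma> u) \<subseteq> V" using setsig[of u] by (auto simp: V_def)
  have sub2: "set (morph \<sigma> v) \<subseteq> V" using setsig[of v] by (auto simp: V_def)
  have gg': "good g' V"
  proof (cases "z = x")
    case True
    then have mv: "morph \<sigma> v = y # (x # morph \<sigma> v')" by (simp add: v \<sigma>_def)
    have "good g' (set (x # morph \<sigma> u) \<union> set (y # (x # morph \<sigma> v')))"
      apply (rule IH[of g' x y "morph \<sigma> u" "x # morph \<sigma> v'"])
      using meas apply simp
      using xy apply simp
      using eq2 mv apply simp
      using ne' sub1 sub2 unfolding mv[symmetric] apply blast
      done
    then show ?thesis using sub1 sub2 unfolding mv[symmetric] by (meson good_mono Un_least)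
  next
    case zx: False
    then have mv: "morph \<sigma> v = z # morph \<sigma> v'" by (simp add: v \<sigma>_def)
    have "good g' (set (x # morph \<sigma> u) \<union> set (z # morph \<sigma> v'))"
      apply (rule IH[of g' x z "morph \<sigma> u" "morph \<sigma> v'"])
      using meas apply simp
      using zx apply simp
      using eq2 mv apply simp
      using ne' sub1 sub2 unfolding mv[symmetric] apply blast
      done
    then show ?thesis using sub1 sub2 unfolding mv[symmetric] by (meson good_mono Un_least)
  qed
  then obtain c' :: "'x \<Rightarrow> rat" where c'1: "\<exists>w. c' w \<noteq> 0" and c'2: "\<forall>w. c' w \<noteq> 0 \<longrightarrow> w \<in> V"
    and c'3: "\<forall>a. (\<Sum>w\<in>UNIV. c' w * of_nat (count_list (g' w) a)) = 0"
    unfolding good_def by blast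
  define c where "c = (\<lambda>w. c' w - (if w = y then c' x else 0))"
  have yV: "y \<in> V" by (simp add: V_def)
  show ?thesis unfolding V_def[symmetric] good_def
  proof (intro exI[of _ c] conjI allI impI)
    show "\<exists>w. c w \<noteq> 0"
    proof (cases "c' x = 0")
      case True then show ?thesis using c'1 by (auto simp: c_def)
    next
      case False then show ?thesis using xy by (intro exI[of _ x]) (simp add: c_def)
    qed
  next
    fix w assume "c w \<noteq> 0" thus "w \<in> V" using c'2 yV by (auto simp: c_def split: if_splits)
  next
    fix a
    define F where "F = (\<lambda>w. (of_nat (count_list (g w) a))::rat)"
    have F': "of_nat (count_list (g' w) a) = F w - (if w = x then F y else 0)" for w
      using gx by (auto simp: F_def g'_def)
    have "(\<Sum>w\<in>UNIV. c' w * of_nat (count_list (g' w) a))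
        = (\<Sum>w\<in>UNIV. c' w * F w - (if w = x then c' x * F y else 0))"
      by (rule sum.cong) (auto simp: F' right_diff_distrib)
    also have "\<dots> = (\<Sum>w\<in>UNIV. c' w * F w) - (\<Sum>w\<in>UNIV. (if w = x then c' x * F y else 0))"
      by (rule sum_subtractf)
    also have "\<dots> = (\<Sum>w\<in>UNIV. c' w * F w) - (\<Sum>w\<in>UNIV. (if w = y then c' x * F y else 0))"
      by simp
    also have "\<dots> = (\<Sum>w\<in>UNIV. c' w * F w - (if w = y then c' x * F y else 0))"
      by (rule sum_subtractf[symmetric])
    also have "\<dots> = (\<Sum>w\<in>UNIV. c w * F w)"
      by (rule sum.cong) (auto simp: c_def left_diff_distrib)
    finally show "(\<Sum>w\<in>UNIV. c w * of_nat (count_list (g w) a)) = 0"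
      using c'3 by (simp add: F_def)
  qed
qed


lemma core:
  fixes g :: "'x::finite \<Rightarrow> 'a list"
  shows "x \<noteq> y \<Longrightarrow> morph g (x#u) = morph g (y#v) \<Longrightarrow> (\<forall>z\<in>set (x#u) \<union> set (y#v). g z \<noteq> [])
     \<Longrightarrow> good g (set (x#u) \<union> set (y#v))"
proof (induction "\<Sum>z\<in>UNIV. length (g z)" arbitrary: g x y u v rule: less_induct)
  case (less g x y u v)
  from less.prems(2) have "g x @ morph g u = g y @ morph g v" by simp
  then obtain us where "(g x = g y @ us \<and> us @ morph g u = morph g v) \<or> (g x @ us = g y \<and> morph g u = us @ morph g v)"
    by (auto simp: append_eq_append_conv2)
  then show ?case
  proof
    assume "g x = g y @ us \<and> us @ morph g u = morph g v"
    then have A1: "g x = g y @ us" by (rule conjunct1)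
    show ?thesis by (rule core_step[OF less.hyps less.prems A1])
  next
    assume "g x @ us = g y \<and> morph g u = us @ morph g v"
    note A = this
    have p1: "y \<noteq> x" using less.prems(1) by simp
    have p2: "morph g (y#v) = morph g (x#u)" using less.prems(2) by simp
    have p3: "\<forall>z\<in>set (y#v) \<union> set (x#u). g z \<noteq> []" using less.prems(3) by blast
    have p4: "g y = g x @ us" using A by simp
    have "good g (set (y#v) \<union> set (x#u))"
      by (rule core_step[OF less.hyps p1 p2 p3 p4])
    then show ?thesis by (simp add: Un_commute)
  qed
qed

lemma first_diff:
  "u \<noteq> v \<Longrightarrow> morph g u = morph g v \<Longrightarrow> \<forall>z\<in>set u \<union> set v. g z \<noteq> [] \<Longrightarrow>
   \<exists>x u' y v'. x \<noteq> y \<and> morph g (x#u') = morph g (y#v') \<and> set (x#u') \<subseteq> set u \<and> set (y#v') \<subseteq> set v"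
proof (induction u arbitrary: v)
  case Nil
  then obtain b v' where "v = b # v'" by (cases v) auto
  then show ?case using Nil by auto
next
  case (Cons a u)
  show ?case
  proof (cases v)
    case Nil then show ?thesis using Cons.prems by auto
  next
    case (Cons b v')
    show ?thesis
    proof (cases "a = b")
      case True
      then have "u \<noteq> v'" "morph g u = morph g v'" "\<forall>z\<in>set u \<union> set v'. g z \<noteq> []"
        using Cons Cons.prems by auto
      from Cons.IH[OF this] show ?thesis unfolding Cons by fastforce
    next
      case False
      then show ?thesis using Cons.prems Cons by blast
    qed
  qed
qed

lemma axes_span:
  assumes "\<forall>i. i \<notin> I \<longrightarrow> (u::rat^'n) $ i = 0"
  shows "u \<in> vec.span ((\<lambda>i. axis i (1::rat)) ` I)"
proof -
  have "u = (\<Sum>i\<in>UNIV. u$i *s axis i 1)" by (rule basis_expansion[symmetric])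
  also have "\<dots> = (\<Sum>i\<in>I. u$i *s axis i 1)"
    by (rule sum.mono_neutral_right) (use assms in auto)
  finally have eq: "u = (\<Sum>i\<in>I. u$i *s axis i (1::rat))" .
  have "(\<Sum>i\<in>I. u$i *s axis i (1::rat)) \<in> vec.span ((\<lambda>i. axis i (1::rat)) ` I)"
    by (intro vec.span_sum vec.span_scale vec.span_base) auto
  then show ?thesis using eq by simp
qed

lemma morph_filter: "h k = [] \<Longrightarrow> morph h (filter (\<lambda>y. y \<noteq> k) w) = morph h w"
  by (induction w) auto

lemma Gamma_sub:
  fixes h :: "'x::finite \<Rightarrow> 'a::finite list"
  assumes "\<forall>i\<in>Z. h i = []"
  shows "Gamma h \<subseteq> vec.span ((\<lambda>i. axis i (1::rat)) ` (- Z))"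
  unfolding Gamma_def
proof (rule vec.span_minimal)
  show "range (gamma h) \<subseteq> vec.span ((\<lambda>i. axis i (1::rat)) ` (- Z))"
  proof
    fix w assume "w \<in> range (gamma h)"
    then obtain a where "w = gamma h a" by auto
    then have "\<forall>i. i \<notin> - Z \<longrightarrow> w $ i = 0" using assms by (auto simp: gamma_def)
    then show "w \<in> vec.span ((\<lambda>i. axis i (1::rat)) ` (- Z))" by (rule axes_span)
  qed
qed simp

theorem lemma4p1:
  fixes E :: "'x::finite equation" and h :: "'x \<Rightarrow> 'a::finite list"
  assumes "is_solution h E" and "erasing h" and "rank h = CARD('x) - 1"
  shows "(\<exists>!k. h k = []) \<and>
         (\<forall>k. h k = [] \<longrightarrow> trivial_eq (delta k E) \<and> Gamma h = {u. u $ k = 0})"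
proof -
  obtain k0 where k0: "h k0 = []" using assms(2) by (auto simp: erasing_def)
  have uniq: "j = k" if "h j = []" "h k = []" for j k
  proof (rule ccontr)
    assume jk: "j \<noteq> k"
    have "Gamma h \<subseteq> vec.span ((\<lambda>i. axis i (1::rat)) ` (- {j,k}))"
      by (rule Gamma_sub) (use that in auto)
    then have "vec.dim (Gamma h) \<le> card ((\<lambda>i. axis i (1::rat)) ` (- {j,k}))"
      by (rule vec.dim_le_card) simp
    also have "\<dots> \<le> card (- {j,k})" by (rule card_image_le) simp
    also have "card (- {j,k}) = CARD('x) - 2"
    proof -
      have "- {j,k} = UNIV - {j,k}" by auto
      then show ?thesis using jk by (simp add: card_Diff_subset)
    qed
    finally have "CARD('x) - 1 \<le> CARD('x) - 2" using assms(3) by (simp add: rank_def)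
    moreover have "card {j,k} \<le> CARD('x)" by (rule card_mono) auto
    ultimately show False using jk by simp
  qed
  have GammaEq: "Gamma h = {u. u $ k = 0}" if hk: "h k = []" for k
  proof -
    define B where "B = (\<lambda>i. axis i (1::rat)) ` (- {k})"
    have GB: "Gamma h \<subseteq> vec.span B" unfolding B_def by (rule Gamma_sub) (use hk in auto)
    have indB: "vec.independent B"
      by (rule vec.independent_mono[OF independent_cart_basis]) (auto simp: B_def cart_basis_def)
    have cardB: "card B = CARD('x) - 1"
    proof -
      have "inj_on (\<lambda>i. axis i (1::rat)) (- {k})" by (auto simp: inj_on_def axis_eq_axis)
      then have "card B = card (- {k})" unfolding B_def by (rule card_image)
      also have "- {k} = UNIV - {k}" by auto
      finally show ?thesis by (simp add: card_Diff_subset)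
    qed
    obtain C where C: "C \<subseteq> Gamma h" "vec.independent C" "Gamma h \<subseteq> vec.span C" "card C = vec.dim (Gamma h)"
      by (rule vec.basis_exists)
    have "vec.span B \<subseteq> vec.span C"
    proof (rule vec.card_ge_dim_independent)
      show "C \<subseteq> vec.span B" using C GB by blast
      show "vec.independent C" by fact
      show "vec.dim (vec.span B) \<le> card C"
        using C(4) assms(3) cardB vec.dim_span_eq_card_independent[OF indB] by (simp add: rank_def)
    qed
    also have "vec.span C \<subseteq> Gamma h"
      unfolding Gamma_def by (rule vec.span_minimal) (use C(1) in \<open>auto simp: Gamma_def\<close>)
    finally have BG: "vec.span B \<subseteq> Gamma h" .
    have "{u. u $ k = 0} \<subseteq> vec.span B" unfolding B_def by (auto intro: axes_span)
    moreover have "Gamma h \<subseteq> {u. u $ k = 0}"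
      unfolding Gamma_def
    proof (rule vec.span_minimal)
      show "range (gamma h) \<subseteq> {u. u $ k = 0}" using hk by (auto simp: gamma_def)
      show "vec.subspace {u. u $ k = (0::rat)}" by (auto simp: vec.subspace_def)
    qed
    ultimately show ?thesis using BG by blast
  qed
  have triv: "trivial_eq (delta k E)" if hk: "h k = []" for k
  proof (rule ccontr)
    define u where "u = filter (\<lambda>y. y \<noteq> k) (fst E)"
    define v where "v = filter (\<lambda>y. y \<noteq> k) (snd E)"
    assume "\<not> trivial_eq (delta k E)"
    then have uv: "u \<noteq> v" by (simp add: trivial_eq_def delta_def u_def v_def)
    have meq: "morph h u = morph h v"
      using assms(1) by (simp add: u_def v_def morph_filter[of h k, OF hk] is_solution_def)
    have ne: "\<forall>z\<in>set u \<union> set v. h z \<noteq> []"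
      using uniq[OF _ hk] by (auto simp: u_def v_def)
    obtain x u' y v' where xy: "x \<noteq> y" "morph h (x#u') = morph h (y#v')" "set (x#u') \<subseteq> set u" "set (y#v') \<subseteq> set v"
      using first_diff[OF uv meq ne] by blast
    have "good h (set (x#u') \<union> set (y#v'))"
      by (rule core[OF xy(1,2)]) (use xy(3,4) ne in blast)
    then obtain c :: "'x \<Rightarrow> rat" where c1: "\<exists>w. c w \<noteq> 0" and c2: "\<forall>w. c w \<noteq> 0 \<longrightarrow> w \<in> set (x#u') \<union> set (y#v')"
      and c3: "\<forall>a. (\<Sum>w\<in>UNIV. c w * of_nat (count_list (h w) a)) = 0"
      unfolding good_def by blast
    obtain j where cj: "c j \<noteq> 0" using c1 by blast
    have "j \<in> set u \<union> set v" using c2 cj xy(3,4) by blast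
    then have jk: "j \<noteq> k" by (auto simp: u_def v_def)
    define L where "L = {w::rat^'x. (\<Sum>i\<in>UNIV. c i * w $ i) = 0}"
    have "Gamma h \<subseteq> L"
      unfolding Gamma_def
    proof (rule vec.span_minimal)
      show "range (gamma h) \<subseteq> L" using c3 by (auto simp: L_def gamma_def)
      show "vec.subspace L"
        by (auto simp: vec.subspace_def L_def sum.distrib distrib_left mult.left_commute simp flip: sum_distrib_left)
    qed
    moreover have "axis j 1 \<in> Gamma h" using GammaEq[OF hk] jk by (simp add: axis_def)
    ultimately have "(\<Sum>i\<in>UNIV. c i * (axis j (1::rat)) $ i) = 0" by (auto simp: L_def)
    moreover have "(\<Sum>i\<in>UNIV. c i * (axis j (1::rat)) $ i) = c j"
      by (simp add: axis_def if_distrib cong: if_cong)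
    ultimately show False using cj by simp
  qed
  have "\<exists>!k. h k = []"
  proof (rule ex1I[of _ k0])
    show "h k0 = []" by (rule k0)
    fix j assume "h j = []" then show "j = k0" by (rule uniq[OF _ k0])
  qed
  moreover have "\<forall>k. h k = [] \<longrightarrow> trivial_eq (delta k E) \<and> Gamma h = {u. u $ k = 0}"
    using triv GammaEq by blast
  ultimately show ?thesis by (rule conjI)
qed

end
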